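(* For every integer $l\ge1$, let $\mathcal{I}_6(l)$ be the index coding instance on $[4l+1]$ with $A_{2i-1}=\{2j: j\in[2l]\setminus\{i\}\}\cup\{4l+1\}$ and $A_{2i}=\{2i-1\}$ for $i\in[2l]$, and $A_{4l+1}=\{2i-1: i\in[2l]\}$. Then the UMCD algorithm on $\mathcal{I}_6(l)$ outputs $\beta_{\text{UMCD}}(\mathcal{I}_6(l))=2l+1$.
   Context: Instance: side-information sets $A_i\subseteq[m]\setminus\{i\}$, $B_i=[m]\setminus(A_i\cup\{i\})$. For a $0/1$ matrix $\boldsymbol{G}$ with columns indexed by $[m]$, $\boldsymbol{G}_{[k]}^{L}$ is the submatrix of its first $k$ rows and columns $L$; $\mathrm{mcm}(\boldsymbol{G})$ is the maximum number of $1$-entries no two in a common row or column (0 if no columns). UMCD algorithm: $N=[m]$, $k=0$; while $N\ne\emptyset$: $k\leftarrow k+1$; pick $w\in N$ with $|A_w|$ minimal over $N$ (arbitrary tie-breaking); row $k$ of $\boldsymbol{G}$ is the indicator vector of $\{w\}\cup A_w$; remove $w$ from $N$; remove from $N$ every $i$ with $\mathrm{mcm}(\boldsymbol{G}_{[k]}^{\{i\}\cup B_i})=\mathrm{mcm}(\boldsymbol{G}_{[k]}^{B_i})+1$; output $\beta_{\text{UMCD}}=k$. *)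

theory Defs
  imports Main
begin

text \<open>A 0/1 matrix G with columns indexed by [m] is represented by the list of its rows;
  row r (0-based) is the set of columns c with entry 1.  A matching in the submatrix
  consisting of the first k rows and the columns in L is a set of 1-entries (r,c),
  no two in a common row or column.\<close>

definition matchings :: "nat set list \<Rightarrow> nat \<Rightarrow> nat set \<Rightarrow> (nat \<times> nat) set set" where
  "matchings G k L = {M. M \<subseteq> {(r, c). r < k \<and> r < length G \<and> c \<in> L \<and> c \<in> G ! r}
                          \<and> inj_on fst M \<and> inj_on snd M}"

definition mcm :: "nat set list \<Rightarrow> nat \<Rightarrow> nat set \<Rightarrow> nat" where
  "mcm G k L = Max (card ` matchings G k L)"

definition Bset :: "(nat \<Rightarrow> nat set) \<Rightarrow> nat \<Rightarrow> nat \<Rightarrow> nat set" where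
  "Bset A m i = {1..m} - (A i \<union> {i})"

text \<open>umcd_from A m N G k: starting from the state with remaining set N and current
  matrix G (k rows so far = length G), some run of the UMCD algorithm (with some
  admissible tie-breaking) terminates with output k.\<close>
inductive umcd_from :: "(nat \<Rightarrow> nat set) \<Rightarrow> nat \<Rightarrow> nat set \<Rightarrow> nat set list \<Rightarrow> nat \<Rightarrow> bool"
  for A :: "nat \<Rightarrow> nat set" and m :: nat where
  stop: "umcd_from A m {} G (length G)"
| step: "\<lbrakk> N \<noteq> {}; w \<in> N; \<forall>i\<in>N. card (A w) \<le> card (A i);
          G' = G @ [insert w (A w)];
          N' = (N - {w}) - {i \<in> N. mcm G' (length G') (insert i (Bset A m i))
                                     = mcm G' (length G') (Bset A m i) + 1};
          umcd_from A m N' G' k \<rbrakk> \<Longrightarrow> umcd_from A m N G k"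

definition umcd_output :: "(nat \<Rightarrow> nat set) \<Rightarrow> nat \<Rightarrow> nat \<Rightarrow> bool" where
  "umcd_output A m k = umcd_from A m {1..m} [] k"

definition I6 :: "nat \<Rightarrow> nat \<Rightarrow> nat set" where
  "I6 l v =
    (if v = 4*l+1 then {2*i - 1 | i. i \<in> {1..2*l}}
     else if odd v then {2*j | j. j \<in> {1..2*l} \<and> j \<noteq> (v + 1) div 2} \<union> {4*l+1}
     else {v - 1})"

end

theory Submission
  imports Defs
begin



lemma matchings_finite: "finite L \<Longrightarrow> finite (matchings G k L)"
proof -
  assume "finite L"
  have "matchings G k L \<subseteq> Pow ({..<k} \<times> L)" by (auto simp: matchings_def)
  then show ?thesis using \<open>finite L\<close> by (meson finite_Pow_iff finite_SigmaI finite_lessThan finite_subset)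
qed

lemma empty_matching: "{} \<in> matchings G k L" by (simp add: matchings_def)

lemma matching_finite: "M \<in> matchings G k L \<Longrightarrow> finite M"
proof -
  assume M: "M \<in> matchings G k L"
  then have "inj_on fst M" "fst ` M \<subseteq> {..<k}" by (auto simp: matchings_def)
  then show ?thesis by (meson finite_imageD finite_lessThan finite_subset)
qed

lemma mcm_ge: "finite L \<Longrightarrow> M \<in> matchings G k L \<Longrightarrow> card M \<le> mcm G k L"
  unfolding mcm_def by (simp add: matchings_finite)

lemma mcm_le: "finite L \<Longrightarrow> (\<And>M. M \<in> matchings G k L \<Longrightarrow> card M \<le> n) \<Longrightarrow> mcm G k L \<le> n"
  unfolding mcm_def using empty_matching matchings_finite
  by (metis (no_types, lifting) Max_in empty_iff finite_imageI image_iff image_is_empty)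

lemma mcm_rows: "finite L \<Longrightarrow> mcm G k L \<le> card {r. r < k \<and> r < length G \<and> G!r \<inter> L \<noteq> {}}"
proof (rule mcm_le)
  fix M assume M: "M \<in> matchings G k L"
  then have i: "inj_on fst M" and s: "fst ` M \<subseteq> {r. r < k \<and> r < length G \<and> G!r \<inter> L \<noteq> {}}"
    by (auto simp: matchings_def) blast
  have "card M = card (fst ` M)" using i by (simp add: card_image)
  also have "\<dots> \<le> card {r. r < k \<and> r < length G \<and> G!r \<inter> L \<noteq> {}}"
    by (rule card_mono[OF _ s]) auto
  finally show "card M \<le> card {r. r < k \<and> r < length G \<and> G!r \<inter> L \<noteq> {}}" .
qed

lemma mcm_len: "finite L \<Longrightarrow> mcm G k L \<le> length G"
proof -
  assume "finite L"
  then have "mcm G k L \<le> card {r. r < k \<and> r < length G \<and> G!r \<inter> L \<noteq> {}}" by (rule mcm_rows)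
  also have "\<dots> \<le> card {..<length G}" by (rule card_mono) auto
  finally show ?thesis by simp
qed

lemma mcm_cols: "finite L \<Longrightarrow> mcm G k L \<le> card L"
proof (rule mcm_le)
  fix M assume "finite L" "M \<in> matchings G k L"
  then have i: "inj_on snd M" and s: "snd ` M \<subseteq> L"
    by (auto simp: matchings_def)
  have "card M = card (snd ` M)" using i by (simp add: card_image)
  also have "\<dots> \<le> card L" by (rule card_mono[OF \<open>finite L\<close> s])
  finally show "card M \<le> card L" .
qed

lemma mcm_insert: "finite L \<Longrightarrow> mcm G k (insert x L) \<le> mcm G k L + 1"
proof (rule mcm_le)
  fix M assume fL: "finite L" and M: "M \<in> matchings G k (insert x L)"
  define M' where "M' = {p \<in> M. snd p \<noteq> x}"
  define X where "X = {p \<in> M. snd p = x}"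
  have fM: "finite M" using M by (rule matching_finite)
  have M'm: "M' \<in> matchings G k L" using M unfolding M'_def matchings_def
    by (auto intro: inj_on_subset)
  have c1: "card M' \<le> mcm G k L" by (rule mcm_ge[OF fL M'm])
  have "inj_on snd X" using M unfolding X_def matchings_def by (auto intro: inj_on_subset)
  then have "card X = card (snd ` X)" by (simp add: card_image)
  also have "\<dots> \<le> card {x}" by (rule card_mono) (auto simp: X_def)
  finally have c2: "card X \<le> 1" by simp
  have "M = M' \<union> X" by (auto simp: M'_def X_def)
  then have "card M \<le> card M' + card X" by (metis card_Un_le)
  then show "card M \<le> mcm G k L + 1" using c1 c2 by simp
qed simp

lemma mcm_fun:
  assumes "finite L" "n \<le> k" "n \<le> length G" "inj_on f {..<n}"
    "\<And>r. r < n \<Longrightarrow> f r \<in> G!r \<and> f r \<in> L"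
  shows "n \<le> mcm G k L"
proof -
  define M where "M = (\<lambda>r. (r, f r)) ` {..<n}"
  have s: "M \<subseteq> {(r, c). r < k \<and> r < length G \<and> c \<in> L \<and> c \<in> G ! r}"
    unfolding M_def using assms(2,3,5) by fastforce
  have i1: "inj_on fst M" unfolding M_def by (rule inj_onI) auto
  have i2: "inj_on snd M" unfolding M_def using assms(4) by (auto simp: inj_on_def)
  have Mm: "M \<in> matchings G k L" unfolding matchings_def using s i1 i2 by blast
  have "card M \<le> mcm G k L" by (rule mcm_ge[OF assms(1) Mm])
  moreover have "card M = n" unfolding M_def by (simp add: card_image inj_on_def)
  ultimately show ?thesis by simp
qed




lemma img_even: "x \<in> (\<lambda>j::nat. 2*j) ` S \<longleftrightarrow> even x \<and> x div 2 \<in> S"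
  by auto

lemma img_odd: "(\<forall>j\<in>S. 1 \<le> j) \<Longrightarrow> x \<in> (\<lambda>j::nat. 2*j - 1) ` S \<longleftrightarrow> odd x \<and> (x+1) div 2 \<in> S"
proof
  assume "\<forall>j\<in>S. 1 \<le> j" "x \<in> (\<lambda>j::nat. 2*j - 1) ` S"
  then obtain j where "j \<in> S" "x = 2*j - 1" "1 \<le> j" by auto
  then show "odd x \<and> (x+1) div 2 \<in> S" by auto
next
  assume "odd x \<and> (x+1) div 2 \<in> S"
  then have "x = 2*((x+1) div 2) - 1" "(x+1) div 2 \<in> S" by auto
  then show "x \<in> (\<lambda>j::nat. 2*j - 1) ` S" by blast
qed

definition E :: "nat \<Rightarrow> nat set" where "E j = {2*j - 1, 2*j}"

definition Nset :: "nat \<Rightarrow> nat list \<Rightarrow> nat set" where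
  "Nset l xs = (\<lambda>j. 2*j) ` ({1..2*l} - set xs) \<union> (\<lambda>j. 2*j - 1) ` {1..2*l} \<union> {4*l+1}"

abbreviation rm :: "nat \<Rightarrow> nat set list \<Rightarrow> nat \<Rightarrow> bool" where
  "rm l G v \<equiv> mcm G (length G) (insert v (Bset (I6 l) (4*l+1) v))
      = mcm G (length G) (Bset (I6 l) (4*l+1) v) + 1"

lemma I6_even: "1 \<le> j \<Longrightarrow> I6 l (2*j) = {2*j-1}"
  unfolding I6_def by (auto; presburger)

lemma I6_odd: "1 \<le> i \<Longrightarrow> i \<le> 2*l \<Longrightarrow> I6 l (2*i-1) = insert (4*l+1) ((\<lambda>j. 2*j) ` ({1..2*l} - {i}))"
proof -
  assume i: "1 \<le> i" "i \<le> 2*l"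
  have a: "2*i - 1 \<noteq> 4*l+1" using i by auto
  have b: "odd (2*i-1)" using i by presburger
  have c: "(2*i-1+1) div 2 = i" using i by simp
  show ?thesis unfolding I6_def using a b c by auto
qed

lemma I6_top: "I6 l (4*l+1) = (\<lambda>i. 2*i-1) ` {1..2*l}"
  unfolding I6_def by auto

lemma card_even: "1 \<le> j \<Longrightarrow> card (I6 l (2*j)) = 1"
  by (simp add: I6_even)

lemma card_top: "card (I6 l (4*l+1)) = 2*l"
proof -
  have "inj_on (\<lambda>i::nat. 2*i-1) {1..2*l}" by (auto simp: inj_on_def)
  then show ?thesis unfolding I6_top by (simp add: card_image)
qed

lemma card_odd: "1 \<le> i \<Longrightarrow> i \<le> 2*l \<Longrightarrow> card (I6 l (2*i-1)) = 2*l"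
proof -
  assume i: "1 \<le> i" "i \<le> 2*l"
  have "inj_on (\<lambda>i::nat. 2*i) ({1..2*l} - {i})" by (auto simp: inj_on_def)
  then have "card ((\<lambda>j. 2*j) ` ({1..2*l} - {i})) = 2*l - 1" using i by (simp add: card_image)
  moreover have "4*l+1 \<notin> (\<lambda>j. 2*j) ` ({1..2*l} - {i})" by auto presburger
  ultimately show ?thesis unfolding I6_odd[OF i] using i by simp
qed

lemma mem_B_even: "1 \<le> j \<Longrightarrow> j \<le> 2*l \<Longrightarrow>
  x \<in> Bset (I6 l) (4*l+1) (2*j) \<longleftrightarrow> 1 \<le> x \<and> x \<le> 4*l+1 \<and> x \<noteq> 2*j-1 \<and> x \<noteq> 2*j"
  unfolding Bset_def by (auto simp: I6_even)

lemma mem_B_odd: assumes "1 \<le> i" "i \<le> 2*l" shows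
  "x \<in> Bset (I6 l) (4*l+1) (2*i-1) \<longleftrightarrow> 1 \<le> x \<and> x \<le> 4*l \<and> x \<noteq> 2*i-1 \<and> (even x \<longrightarrow> x = 2*i)"
  unfolding Bset_def I6_odd[OF \<open>1 \<le> i\<close> \<open>i \<le> 2*l\<close>] by (auto simp: img_even; presburger)

lemma mem_B_top: "x \<in> Bset (I6 l) (4*l+1) (4*l+1) \<longleftrightarrow> 1 \<le> x \<and> x \<le> 4*l \<and> even x"
proof -
  have h: "x \<in> (\<lambda>i. 2*i-1) ` {1..2*l} \<longleftrightarrow> odd x \<and> (x+1) div 2 \<in> {1..2*l}" by (rule img_odd) auto
  have e: "x \<in> Bset (I6 l) (4*l+1) (4*l+1) \<longleftrightarrow> x \<in> {1..4*l+1} \<and> x \<notin> (\<lambda>i. 2*i-1) ` {1..2*l} \<and> x \<noteq> 4*l+1"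
    unfolding Bset_def I6_top by blast
  show ?thesis unfolding e h by (simp; presburger)
qed

lemma fin_B: "finite (Bset A m v)" unfolding Bset_def by auto

lemma card_B_top: "card (Bset (I6 l) (4*l+1) (4*l+1)) \<le> 2*l"
proof -
  have "Bset (I6 l) (4*l+1) (4*l+1) \<subseteq> (\<lambda>j. 2*j) ` {1..2*l}"
  proof
    fix x assume "x \<in> Bset (I6 l) (4*l+1) (4*l+1)"
    then have "1 \<le> x \<and> x \<le> 4*l \<and> even x" by (simp only: mem_B_top)
    then show "x \<in> (\<lambda>j. 2*j) ` {1..2*l}" by (auto simp: img_even)
  qed
  then have "card (Bset (I6 l) (4*l+1) (4*l+1)) \<le> card ((\<lambda>j::nat. 2*j) ` {1..2*l})"
    by (rule card_mono[rotated]) auto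
  also have "\<dots> \<le> 2*l" using card_image_le[of "{1..2*l}" "\<lambda>j::nat. 2*j"] by simp
  finally show ?thesis .
qed

lemma card_B_odd: "1 \<le> i \<Longrightarrow> i \<le> 2*l \<Longrightarrow> card (Bset (I6 l) (4*l+1) (2*i-1)) \<le> 2*l"
proof -
  assume i: "1 \<le> i" "i \<le> 2*l"
  have "Bset (I6 l) (4*l+1) (2*i-1) \<subseteq> insert (2*i) ((\<lambda>j. 2*j-1) ` ({1..2*l}-{i}))"
  proof
    fix x assume "x \<in> Bset (I6 l) (4*l+1) (2*i-1)"
    then have x: "1 \<le> x" "x \<le> 4*l" "x \<noteq> 2*i-1" "even x \<longrightarrow> x = 2*i" using mem_B_odd[OF i] by auto
    show "x \<in> insert (2*i) ((\<lambda>j. 2*j-1) ` ({1..2*l}-{i}))"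
    proof (cases "even x")
      case True then show ?thesis using x by simp
    next
      case False
      then have "x = 2*((x+1) div 2) - 1" by presburger
      moreover have "(x+1) div 2 \<in> {1..2*l}-{i}" using x False by auto presburger+
      ultimately show ?thesis by blast
    qed
  qed
  then have "card (Bset (I6 l) (4*l+1) (2*i-1)) \<le> card (insert (2*i) ((\<lambda>j. 2*j-1) ` ({1..2*l}-{i})))"
    by (rule card_mono[rotated]) auto
  also have "\<dots> \<le> Suc (card ((\<lambda>j. 2*j-1) ` ({1..2*l}-{i})))" by (rule card_insert_le_m1) auto
  also have "\<dots> \<le> Suc (card ({1..2*l}-{i}))" using card_image_le by auto
  also have "\<dots> = 2*l" using i by simp
  finally show ?thesis .
qed




lemma mem_B_even': "1 \<le> j \<Longrightarrow> j \<le> 2*l \<Longrightarrow>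
  x \<in> Bset (I6 l) (Suc (4*l)) (2*j) \<longleftrightarrow> 1 \<le> x \<and> x \<le> 4*l+1 \<and> x \<noteq> 2*j-1 \<and> x \<noteq> 2*j"
  using mem_B_even[of j l x] by simp

lemma mem_B_odd': "1 \<le> i \<Longrightarrow> i \<le> 2*l \<Longrightarrow>
  x \<in> Bset (I6 l) (Suc (4*l)) (2*i - Suc 0) \<longleftrightarrow> 1 \<le> x \<and> x \<le> 4*l \<and> x \<noteq> 2*i-1 \<and> (even x \<longrightarrow> x = 2*i)"
  using mem_B_odd[of i l x] by simp

lemma mem_B_top': "x \<in> Bset (I6 l) (Suc (4*l)) (Suc (4*l)) \<longleftrightarrow> 1 \<le> x \<and> x \<le> 4*l \<and> even x"
  using mem_B_top[of x l] by simp

lemma rm_yes: "finite B \<Longrightarrow> n+1 \<le> mcm G k (insert v B) \<Longrightarrow> mcm G k B \<le> n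
  \<Longrightarrow> mcm G k (insert v B) = mcm G k B + 1"
  using mcm_insert[of B G k v] by linarith

lemma rm_no: "mcm G k (insert v B) \<le> n \<Longrightarrow> n \<le> mcm G k B
  \<Longrightarrow> mcm G k (insert v B) \<noteq> mcm G k B + 1"
  by linarith

lemma nthE: "r < length xs \<Longrightarrow> map E xs ! r = {2*(xs!r)-1, 2*(xs!r)}"
  by (simp add: E_def)

lemma V1: assumes d: "distinct xs" and s: "set xs \<subseteq> {1..2*l}" and j: "j \<in> set xs"
  shows "rm l (map E xs) (2*j)"
proof -
  let ?G = "map E xs" let ?B = "Bset (I6 l) (4*l+1) (2*j)" let ?n = "length xs"
  have j1: "1 \<le> j" "j \<le> 2*l" using s j by auto
  have fB: "finite ?B" by (rule fin_B)
  obtain r0 where r0: "r0 < ?n" "xs!r0 = j" using j by (metis in_set_conv_nth)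
  have lo: "(?n - 1) + 1 \<le> mcm ?G (length ?G) (insert (2*j) ?B)"
  proof -
    have "?n \<le> mcm ?G (length ?G) (insert (2*j) ?B)"
    proof (rule mcm_fun[where f="\<lambda>r. 2*(xs!r)"])
      show "finite (insert (2*j) ?B)" using fB by simp
      show "?n \<le> length ?G" by simp
      show "?n \<le> length ?G" by simp
      show "inj_on (\<lambda>r. 2*(xs!r)) {..<?n}" using d by (auto simp: inj_on_def nth_eq_iff_index_eq)
      fix r assume r: "r < ?n"
      then have a: "1 \<le> xs!r" "xs!r \<le> 2*l" using s nth_mem by fastforce+
      have m1: "2*(xs!r) \<in> ?G!r" using r by (simp add: E_def)
      have m2: "2*(xs!r) \<in> insert (2*j) ?B"
      proof (cases "xs!r = j")
        case False
        then have "2*(xs!r) \<in> ?B" unfolding mem_B_even[OF j1] using a j1 by presburger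
        then show ?thesis by simp
      qed simp
      show "2*(xs!r) \<in> ?G!r \<and> 2*(xs!r) \<in> insert (2*j) ?B" using m1 m2 by simp
    qed
    then show ?thesis using r0 by simp
  qed
  have up: "mcm ?G (length ?G) ?B \<le> ?n - 1"
  proof -
    have "mcm ?G (length ?G) ?B \<le> card {r. r < length ?G \<and> r < length ?G \<and> ?G!r \<inter> ?B \<noteq> {}}"
      by (rule mcm_rows[OF fB])
    also have "\<dots> \<le> card ({..<?n} - {r0})"
    proof (rule card_mono)
      have dj: "E j \<inter> ?B = {}" unfolding E_def using mem_B_even[OF j1] by auto
      show "{r. r < length ?G \<and> r < length ?G \<and> ?G!r \<inter> ?B \<noteq> {}} \<subseteq> {..<?n} - {r0}"
        using dj r0 by auto
    qed simp
    also have "\<dots> = ?n - 1" using r0 by simp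
    finally show ?thesis .
  qed
  show ?thesis by (rule rm_yes[OF fB lo up])
qed

lemma V2: assumes d: "distinct xs" and s: "set xs \<subseteq> {1..2*l}" and j: "j \<in> {1..2*l}" "j \<notin> set xs"
  shows "\<not> rm l (map E xs) (2*j)"
proof -
  let ?G = "map E xs" let ?B = "Bset (I6 l) (4*l+1) (2*j)" let ?n = "length xs"
  have fB: "finite ?B" by (rule fin_B)
  have lo: "?n \<le> mcm ?G (length ?G) ?B"
  proof (rule mcm_fun[where f="\<lambda>r. 2*(xs!r)"])
    show "finite ?B" by (rule fB)
    show "?n \<le> length ?G" by simp
    show "?n \<le> length ?G" by simp
    show "inj_on (\<lambda>r. 2*(xs!r)) {..<?n}" using d by (auto simp: inj_on_def nth_eq_iff_index_eq)
    fix r assume r: "r < ?n"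
    then have a: "1 \<le> xs!r" "xs!r \<le> 2*l" "xs!r \<noteq> j" using s nth_mem j by fastforce+
    have j1: "1 \<le> j" "j \<le> 2*l" using j by auto
    have m1: "2*(xs!r) \<in> ?G!r" using r by (simp add: E_def)
    have "2*(xs!r) \<in> ?B" unfolding mem_B_even[OF j1] using a j1 by presburger
    then show "2*(xs!r) \<in> ?G!r \<and> 2*(xs!r) \<in> ?B" using m1 by simp
  qed
  have fI: "finite (insert (2*j) ?B)" using fB by simp
  have up: "mcm ?G (length ?G) (insert (2*j) ?B) \<le> ?n" using mcm_len[OF fI, of ?G "length ?G"] by simp
  show ?thesis by (rule rm_no[OF up lo])
qed

lemma V3: assumes d: "distinct xs" and s: "set xs \<subseteq> {1..2*l}" and i: "i \<in> {1..2*l}"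
  shows "\<not> rm l (map E xs) (2*i-1)"
proof -
  let ?G = "map E xs" let ?B = "Bset (I6 l) (4*l+1) (2*i-1)" let ?n = "length xs"
  let ?f = "\<lambda>r. if xs!r = i then 2*i else 2*(xs!r) - 1"
  have fB: "finite ?B" by (rule fin_B)
  have lo: "?n \<le> mcm ?G (length ?G) ?B"
  proof (rule mcm_fun[where f="?f"])
    show "finite ?B" by (rule fB)
    show "?n \<le> length ?G" by simp
    show "?n \<le> length ?G" by simp
    show "inj_on ?f {..<?n}"
    proof (rule inj_onI)
      fix a b assume a: "a \<in> {..<?n}" and b: "b \<in> {..<?n}" and e: "?f a = ?f b"
      have "xs!a \<ge> 1" "xs!b \<ge> 1" using a b s nth_mem by fastforce+
      then have "xs!a = xs!b" using e by (auto split: if_splits; presburger)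
      then show "a = b" using a b d by (simp add: nth_eq_iff_index_eq)
    qed
    fix r assume r: "r < ?n"
    then have a: "1 \<le> xs!r" "xs!r \<le> 2*l" using s nth_mem by fastforce+
    have i1: "1 \<le> i" "i \<le> 2*l" using i by auto
    show "?f r \<in> ?G!r \<and> ?f r \<in> ?B"
    proof (cases "xs!r = i")
      case True
      have "2*i \<in> ?B" unfolding mem_B_odd[OF i1] using i1 by presburger
      then show ?thesis using True r by (simp add: E_def)
    next
      case False
      have "2*(xs!r) - 1 \<in> ?B" unfolding mem_B_odd[OF i1] using i1 a False by presburger
      then show ?thesis using False r by (simp add: E_def)
    qed
  qed
  have fI: "finite (insert (2*i-1) ?B)" using fB by simp
  have up: "mcm ?G (length ?G) (insert (2*i-1) ?B) \<le> ?n" using mcm_len[OF fI, of ?G "length ?G"] by simp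
  show ?thesis by (rule rm_no[OF up lo])
qed

lemma V4: assumes d: "distinct xs" and s: "set xs \<subseteq> {1..2*l}"
  shows "\<not> rm l (map E xs) (4*l+1)"
proof -
  let ?G = "map E xs" let ?B = "Bset (I6 l) (4*l+1) (4*l+1)" let ?n = "length xs"
  have fB: "finite ?B" by (rule fin_B)
  have lo: "?n \<le> mcm ?G (length ?G) ?B"
  proof (rule mcm_fun[where f="\<lambda>r. 2*(xs!r)"])
    show "finite ?B" by (rule fB)
    show "?n \<le> length ?G" by simp
    show "?n \<le> length ?G" by simp
    show "inj_on (\<lambda>r. 2*(xs!r)) {..<?n}" using d by (auto simp: inj_on_def nth_eq_iff_index_eq)
    fix r assume r: "r < ?n"
    then have a: "1 \<le> xs!r" "xs!r \<le> 2*l" using s nth_mem by fastforce+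
    have "2*(xs!r) \<in> ?B" unfolding mem_B_top using a by presburger
    then show "2*(xs!r) \<in> ?G!r \<and> 2*(xs!r) \<in> ?B" using r by (simp add: E_def)
  qed
  have fI: "finite (insert (4*l+1) ?B)" using fB by simp
  have up: "mcm ?G (length ?G) (insert (4*l+1) ?B) \<le> ?n" using mcm_len[OF fI, of ?G "length ?G"] by simp
  show ?thesis by (rule rm_no[OF up lo])
qed




lemma len_full: "distinct xs \<Longrightarrow> set xs = {1..2*l} \<Longrightarrow> length xs = 2*l"
  by (metis card_atLeastAtMost diff_Suc_1 distinct_card plus_1_eq_Suc add.commute)

lemma nth_full: "set xs = {1..2*l} \<Longrightarrow> r < length xs \<Longrightarrow> 1 \<le> xs!r \<and> xs!r \<le> 2*l"
  using nth_mem by fastforce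

lemma F1: assumes d: "distinct xs" and s: "set xs = {1..2*l}" and i: "i \<in> {1..2*l}"
  shows "rm l (map E xs @ [insert (4*l+1) (I6 l (4*l+1))]) (2*i-1)"
proof -
  let ?R = "insert (4*l+1) (I6 l (4*l+1))"
  let ?G = "map E xs @ [?R]" let ?B = "Bset (I6 l) (4*l+1) (2*i-1)"
  have n: "length xs = 2*l" by (rule len_full[OF d s])
  have i1: "1 \<le> i" "i \<le> 2*l" using i by auto
  have fB: "finite ?B" by (rule fin_B)
  have up: "mcm ?G (length ?G) ?B \<le> 2*l"
    using mcm_cols[OF fB, of ?G "length ?G"] card_B_odd[OF i1] by linarith
  let ?f = "\<lambda>r. if r < 2*l then (if xs!r = i then 2*i else 2*(xs!r) - 1) else 2*i-1"
  have lo: "2*l+1 \<le> mcm ?G (length ?G) (insert (2*i-1) ?B)"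
  proof (rule mcm_fun[where f="?f"])
    show "finite (insert (2*i-1) ?B)" using fB by simp
    show "2*l+1 \<le> length ?G" using n by simp
    show "2*l+1 \<le> length ?G" using n by simp
    show "inj_on ?f {..<2*l+1}"
    proof (rule inj_onI)
      fix a b assume a: "a \<in> {..<2*l+1}" and b: "b \<in> {..<2*l+1}" and e: "?f a = ?f b"
      show "a = b"
      proof (cases "a < 2*l \<and> b < 2*l")
        case True
        then have "1 \<le> xs!a" "1 \<le> xs!b" using nth_full[OF s] n by auto
        then have "xs!a = xs!b" using e True by (auto split: if_splits; presburger)
        then show "a = b" using True n d by (simp add: nth_eq_iff_index_eq)
      next
        case False
        have "\<not> (a < 2*l \<and> b = 2*l)"
        proof
          assume ab: "a < 2*l \<and> b = 2*l"
          then have "1 \<le> xs!a" using nth_full[OF s] n by auto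
          then show False using e ab i1 by (auto split: if_splits; presburger)
        qed
        moreover have "\<not> (b < 2*l \<and> a = 2*l)"
        proof
          assume ab: "b < 2*l \<and> a = 2*l"
          then have "1 \<le> xs!b" using nth_full[OF s] n by auto
          then show False using e ab i1 by (auto split: if_splits; presburger)
        qed
        ultimately show "a = b" using a b False by auto
      qed
    qed
    fix r assume r: "r < 2*l+1"
    show "?f r \<in> ?G!r \<and> ?f r \<in> insert (2*i-1) ?B"
    proof (cases "r < 2*l")
      case True
      then have a: "1 \<le> xs!r" "xs!r \<le> 2*l" using nth_full[OF s] n by auto
      have g: "?G!r = E (xs!r)" using True n by (simp add: nth_append)
      show ?thesis
      proof (cases "xs!r = i")
        case True2: True
        have "2*i \<in> ?B" unfolding mem_B_odd[OF i1] using i1 by presburger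
        then show ?thesis using True True2 g by (simp add: E_def)
      next
        case False
        have "2*(xs!r) - 1 \<in> ?B" unfolding mem_B_odd[OF i1] using i1 a False by presburger
        then show ?thesis using True False g by (simp add: E_def)
      qed
    next
      case False
      then have r2: "r = 2*l" using r by simp
      have g: "?G!r = ?R" using r2 n by (simp add: nth_append)
      have "2*i-1 \<in> I6 l (4*l+1)" unfolding I6_top using i by blast
      then show ?thesis using g False by simp
    qed
  qed
  show ?thesis using rm_yes[OF fB _ up] lo by simp
qed

lemma F2a: assumes d: "distinct xs" and s: "set xs = {1..2*l}" and i: "i \<in> {1..2*l}"
  shows "rm l (map E xs @ [insert (2*i-1) (I6 l (2*i-1))]) (4*l+1)"
proof -
  let ?R = "insert (2*i-1) (I6 l (2*i-1))"
  let ?G = "map E xs @ [?R]" let ?B = "Bset (I6 l) (4*l+1) (4*l+1)"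
  have n: "length xs = 2*l" by (rule len_full[OF d s])
  have i1: "1 \<le> i" "i \<le> 2*l" using i by auto
  have fB: "finite ?B" by (rule fin_B)
  have up: "mcm ?G (length ?G) ?B \<le> 2*l"
    using mcm_cols[OF fB, of ?G "length ?G"] card_B_top[of l] by linarith
  let ?f = "\<lambda>r. if r < 2*l then 2*(xs!r) else 4*l+1"
  have lo: "2*l+1 \<le> mcm ?G (length ?G) (insert (4*l+1) ?B)"
  proof (rule mcm_fun[where f="?f"])
    show "finite (insert (4*l+1) ?B)" using fB by simp
    show "2*l+1 \<le> length ?G" using n by simp
    show "2*l+1 \<le> length ?G" using n by simp
    show "inj_on ?f {..<2*l+1}"
    proof (rule inj_onI)
      fix a b assume a: "a \<in> {..<2*l+1}" and b: "b \<in> {..<2*l+1}" and e: "?f a = ?f b"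
      have "\<not> (a < 2*l \<and> b = 2*l)" using e by (auto; presburger)
      moreover have "\<not> (b < 2*l \<and> a = 2*l)" using e by (auto; presburger)
      moreover have "a < 2*l \<and> b < 2*l \<Longrightarrow> a = b" using e n d by (simp add: nth_eq_iff_index_eq)
      ultimately show "a = b" using a b by fastforce
    qed
    fix r assume r: "r < 2*l+1"
    show "?f r \<in> ?G!r \<and> ?f r \<in> insert (4*l+1) ?B"
    proof (cases "r < 2*l")
      case True
      then have a: "1 \<le> xs!r" "xs!r \<le> 2*l" using nth_full[OF s] n by auto
      have g: "?G!r = E (xs!r)" using True n by (simp add: nth_append)
      have "2*(xs!r) \<in> ?B" unfolding mem_B_top using a by presburger
      then show ?thesis using True g by (simp add: E_def)
    next
      case False
      then have r2: "r = 2*l" using r by simp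
      have g: "?G!r = ?R" using r2 n by (simp add: nth_append)
      have "4*l+1 \<in> I6 l (2*i-1)" unfolding I6_odd[OF i1] by blast
      then show ?thesis using g False by simp
    qed
  qed
  show ?thesis using rm_yes[OF fB _ up] lo by simp
qed

lemma F2b: assumes d: "distinct xs" and s: "set xs = {1..2*l}" and i: "i \<in> {1..2*l}"
  and j: "j \<in> {1..2*l}" and ji: "j \<noteq> i"
  shows "rm l (map E xs @ [insert (2*i-1) (I6 l (2*i-1))]) (2*j-1)"
proof -
  let ?R = "insert (2*i-1) (I6 l (2*i-1))"
  let ?G = "map E xs @ [?R]" let ?B = "Bset (I6 l) (4*l+1) (2*j-1)"
  have n: "length xs = 2*l" by (rule len_full[OF d s])
  have i1: "1 \<le> i" "i \<le> 2*l" using i by auto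
  have j1: "1 \<le> j" "j \<le> 2*l" using j by auto
  have fB: "finite ?B" by (rule fin_B)
  have up: "mcm ?G (length ?G) ?B \<le> 2*l"
    using mcm_cols[OF fB, of ?G "length ?G"] card_B_odd[OF j1] by linarith
  let ?f = "\<lambda>r. if r < 2*l then 2*(xs!r) - 1 else 2*j"
  have lo: "2*l+1 \<le> mcm ?G (length ?G) (insert (2*j-1) ?B)"
  proof (rule mcm_fun[where f="?f"])
    show "finite (insert (2*j-1) ?B)" using fB by simp
    show "2*l+1 \<le> length ?G" using n by simp
    show "2*l+1 \<le> length ?G" using n by simp
    show "inj_on ?f {..<2*l+1}"
    proof (rule inj_onI)
      fix a b assume a: "a \<in> {..<2*l+1}" and b: "b \<in> {..<2*l+1}" and e: "?f a = ?f b"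
      have "\<not> (a < 2*l \<and> b = 2*l)" using e j1 by (auto; presburger)
      moreover have "\<not> (b < 2*l \<and> a = 2*l)" using e j1 by (auto; presburger)
      moreover have "a < 2*l \<and> b < 2*l \<Longrightarrow> a = b"
      proof -
        assume ab: "a < 2*l \<and> b < 2*l"
        then have "1 \<le> xs!a" "1 \<le> xs!b" using nth_full[OF s] n by auto
        then have "xs!a = xs!b" using e ab by simp
        then show "a = b" using ab n d by (simp add: nth_eq_iff_index_eq)
      qed
      ultimately show "a = b" using a b by fastforce
    qed
    fix r assume r: "r < 2*l+1"
    show "?f r \<in> ?G!r \<and> ?f r \<in> insert (2*j-1) ?B"
    proof (cases "r < 2*l")
      case True
      then have a: "1 \<le> xs!r" "xs!r \<le> 2*l" using nth_full[OF s] n by auto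
      have g: "?G!r = E (xs!r)" using True n by (simp add: nth_append)
      have "2*(xs!r) - 1 \<in> insert (2*j-1) ?B"
      proof (cases "xs!r = j")
        case False
        then have "2*(xs!r) - 1 \<in> ?B" unfolding mem_B_odd[OF j1] using a j1 by presburger
        then show ?thesis by simp
      qed simp
      then show ?thesis using True g by (simp add: E_def)
    next
      case False
      then have r2: "r = 2*l" using r by simp
      have g: "?G!r = ?R" using r2 n by (simp add: nth_append)
      have "2*j \<in> I6 l (2*i-1)" unfolding I6_odd[OF i1] using j ji by blast
      moreover have "2*j \<in> ?B" unfolding mem_B_odd[OF j1] using j1 by presburger
      ultimately show ?thesis using g False by simp
    qed
  qed
  show ?thesis using rm_yes[OF fB _ up] lo by simp
qed




lemma Nset_cases: "v \<in> Nset l xs \<Longrightarrow> (\<exists>j. v = 2*j \<and> j \<in> {1..2*l} \<and> j \<notin> set xs) \<or> (\<exists>i. v = 2*i-1 \<and> i \<in> {1..2*l}) \<or> v = 4*l+1"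
  unfolding Nset_def by blast

lemma top_in: "4*l+1 \<in> Nset l xs" unfolding Nset_def by blast

lemma odd_in: "i \<in> {1..2*l} \<Longrightarrow> 2*i-1 \<in> Nset l xs" unfolding Nset_def by blast

lemma even_in: "j \<in> {1..2*l} \<Longrightarrow> j \<notin> set xs \<Longrightarrow> 2*j \<in> Nset l xs" unfolding Nset_def by blast

lemma E_row: "1 \<le> j \<Longrightarrow> insert (2*j) (I6 l (2*j)) = E j"
  by (auto simp: I6_even E_def)

lemma card_pos: "1 \<le> l \<Longrightarrow> v \<in> Nset l xs \<Longrightarrow> 1 \<le> card (I6 l v)"
  using Nset_cases[of v l xs] card_even card_odd card_top by fastforce

lemma card_big: "1 \<le> l \<Longrightarrow> v \<in> Nset l xs \<Longrightarrow> \<not> (\<exists>j. v = 2*j \<and> j \<in> {1..2*l} \<and> j \<notin> set xs) \<Longrightarrow> card (I6 l v) = 2*l"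
  using Nset_cases[of v l xs] card_odd card_top by fastforce

lemma step_even:
  assumes d: "distinct xs" and s: "set xs \<subseteq> {1..2*l}" and j: "j \<in> {1..2*l}" "j \<notin> set xs"
  shows "(Nset l xs - {2*j}) - {v \<in> Nset l xs. rm l (map E (xs@[j])) v} = Nset l (xs@[j])"
proof -
  have d': "distinct (xs@[j])" using d j by simp
  have s': "set (xs@[j]) \<subseteq> {1..2*l}" using s j by simp
  have sub1: "Nset l xs - {2*j} \<subseteq> Nset l (xs@[j])" unfolding Nset_def by auto
  have sub2: "Nset l (xs@[j]) \<subseteq> Nset l xs - {2*j}" unfolding Nset_def by (auto; presburger)
  have nrm: "\<not> rm l (map E (xs@[j])) v" if v: "v \<in> Nset l (xs@[j])" for v
    using Nset_cases[OF v] V2[OF d' s'] V3[OF d' s'] V4[OF d' s'] by blast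
  show ?thesis using sub1 sub2 nrm by blast
qed

lemma final_step:
  assumes d: "distinct xs" and s: "set xs = {1..2*l}" and w: "w \<in> Nset l xs"
  shows "(Nset l xs - {w}) - {v \<in> Nset l xs. rm l (map E xs @ [insert w (I6 l w)]) v} = {}"
proof -
  have cs: "v \<in> Nset l xs \<Longrightarrow> (\<exists>i. v = 2*i-1 \<and> i \<in> {1..2*l}) \<or> v = 4*l+1" for v
    using Nset_cases[of v l xs] s by blast
  have "rm l (map E xs @ [insert w (I6 l w)]) v" if v: "v \<in> Nset l xs" "v \<noteq> w" for v
  proof -
    from cs[OF w] show ?thesis
    proof
      assume "\<exists>i. w = 2*i-1 \<and> i \<in> {1..2*l}"
      then obtain i where wi: "w = 2*i-1" "i \<in> {1..2*l}" by blast
      from cs[OF v(1)] show ?thesis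
      proof
        assume "\<exists>j. v = 2*j-1 \<and> j \<in> {1..2*l}"
        then obtain j where vj: "v = 2*j-1" "j \<in> {1..2*l}" by blast
        then have "j \<noteq> i" using v wi by auto
        then show ?thesis using F2b[OF d s wi(2) vj(2)] vj wi by simp
      next
        assume "v = 4*l+1"
        then show ?thesis using F2a[OF d s wi(2)] wi by simp
      qed
    next
      assume wt: "w = 4*l+1"
      then obtain j where vj: "v = 2*j-1" "j \<in> {1..2*l}" using cs[OF v(1)] v by blast
      then show ?thesis using F1[OF d s vj(2)] wt by simp
    qed
  qed
  then show ?thesis by blast
qed

lemma uniq:
  assumes "umcd_from (I6 l) (4*l+1) N G k"
  shows "1 \<le> l \<Longrightarrow> N = Nset l xs \<Longrightarrow> G = map E xs \<Longrightarrow> distinct xs \<Longrightarrow> set xs \<subseteq> {1..2*l} \<Longrightarrow> k = 2*l+1"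
  using assms
proof (induction arbitrary: xs rule: umcd_from.induct)
  case (stop G)
  then show ?case using top_in[of l xs] by simp
next
  case (step N w G' G N' k)
  show ?case
  proof (cases "set xs = {1..2*l}")
    case False
    then obtain j where j: "j \<in> {1..2*l}" "j \<notin> set xs" using step.prems by blast
    have "2*j \<in> N" using even_in[OF j] step.prems by simp
    then have cw: "card (I6 l w) \<le> 1" using step.hyps(3) card_even[of j l] j by fastforce
    have wN: "w \<in> Nset l xs" using step.hyps(2) step.prems by simp
    then obtain j' where j': "w = 2*j'" "j' \<in> {1..2*l}" "j' \<notin> set xs"
      using card_big[OF step.prems(1) wN] cw step.prems(1) by fastforce
    have G': "G' = map E (xs@[j'])" using step.hyps(4) step.prems E_row[of j' l] j' by simp
    have N': "N' = Nset l (xs@[j'])"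
      using step.hyps(5) step.prems step_even[OF step.prems(4) step.prems(5) j'(2,3)] j'(1) G' by simp
    show ?thesis
      using step.IH[OF step.prems(1) N' G'] step.prems j' by simp
  next
    case True
    have wN: "w \<in> Nset l xs" using step.hyps(2) step.prems by simp
    have N': "N' = {}" using step.hyps(5) step.hyps(4) step.prems final_step[OF step.prems(4) True wN] by simp
    have "k = length G'" using step.hyps(6) unfolding N' by (cases rule: umcd_from.cases) auto
    then show ?thesis using step.hyps(4) step.prems len_full[OF step.prems(4) True] by simp
  qed
qed

lemma exist:
  "1 \<le> l \<Longrightarrow> distinct xs \<Longrightarrow> set xs \<subseteq> {1..2*l} \<Longrightarrow> umcd_from (I6 l) (4*l+1) (Nset l xs) (map E xs) (2*l+1)"
proof (induction "2*l - length xs" arbitrary: xs)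
  case 0
  have "card (set xs) = length xs" using 0 by (simp add: distinct_card)
  then have full: "set xs = {1..2*l}" using 0 by (metis card_atLeastAtMost card_seteq diff_Suc_1 diff_is_0_eq finite_atLeastAtMost)
  let ?w = "4*l+1"
  let ?G' = "map E xs @ [insert ?w (I6 l ?w)]"
  have N': "(Nset l xs - {?w}) - {v \<in> Nset l xs. rm l ?G' v} = {}"
    by (rule final_step[OF 0(3) full top_in])
  have st: "umcd_from (I6 l) (4*l+1) {} ?G' (length ?G')" by (rule umcd_from.stop)
  have len: "length ?G' = 2*l+1" using len_full[OF 0(3) full] by simp
  have mn: "\<forall>i\<in>Nset l xs. card (I6 l ?w) \<le> card (I6 l i)"
  proof
    fix i assume i: "i \<in> Nset l xs"
    have "\<not> (\<exists>j. i = 2*j \<and> j \<in> {1..2*l} \<and> j \<notin> set xs)" using full by blast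
    then show "card (I6 l ?w) \<le> card (I6 l i)" using card_big[OF 0(2) i] card_top[of l] by simp
  qed
  show ?case
    by (rule umcd_from.step[where w="?w" and G'="?G'" and N'="{}"]) (use N' st len mn top_in[of l xs] in auto)
next
  case (Suc n)
  have "length xs < 2*l" using Suc(2) by simp
  moreover have "card (set xs) = length xs" using Suc by (simp add: distinct_card)
  ultimately have "set xs \<noteq> {1..2*l}" by auto
  then obtain j where j: "j \<in> {1..2*l}" "j \<notin> set xs" using Suc by blast
  let ?w = "2*j"
  let ?G' = "map E (xs@[j])"
  have d': "distinct (xs@[j])" using Suc j by simp
  have s': "set (xs@[j]) \<subseteq> {1..2*l}" using Suc j by simp
  have IH: "umcd_from (I6 l) (4*l+1) (Nset l (xs@[j])) ?G' (2*l+1)"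
    using Suc(1)[of "xs@[j]"] Suc(2) Suc(3) d' s' by simp
  have N': "(Nset l xs - {?w}) - {v \<in> Nset l xs. rm l ?G' v} = Nset l (xs@[j])"
    by (rule step_even[OF Suc(4) Suc(5) j])
  have G': "?G' = map E xs @ [insert ?w (I6 l ?w)]" using E_row[of j l] j by simp
  have mn: "\<forall>i\<in>Nset l xs. card (I6 l ?w) \<le> card (I6 l i)"
    using card_pos[OF Suc(3)] card_even[of j l] j by simp
  show ?case
    by (rule umcd_from.step[where w="?w" and G'="?G'" and N'="Nset l (xs@[j])"])
       (use N' IH G' mn even_in[OF j] in auto)
qed

lemma Nset_init: "Nset l [] = {1..4*l+1}"
proof (rule set_eqI)
  fix v
  have h: "v \<in> (\<lambda>i. 2*i-1) ` {1..2*l} \<longleftrightarrow> odd v \<and> (v+1) div 2 \<in> {1..2*l}" by (rule img_odd) auto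
  show "v \<in> Nset l [] \<longleftrightarrow> v \<in> {1..4*l+1}"
    unfolding Nset_def using h img_even[of v "{1..2*l}"] by (simp; presburger)
qed

theorem proposition8:
  fixes l :: nat
  assumes "l \<ge> 1"
  shows "{k. umcd_output (I6 l) (4*l+1) k} = {2*l+1}"
proof -
  have e: "umcd_output (I6 l) (4*l+1) k \<longleftrightarrow> umcd_from (I6 l) (4*l+1) (Nset l []) (map E []) k" for k
    unfolding umcd_output_def Nset_init by simp
  have "umcd_output (I6 l) (4*l+1) k \<longleftrightarrow> k = 2*l+1" for k
    unfolding e using uniq[of l _ _ k "[]"] exist[of l "[]"] assms by auto
  then show ?thesis by blast
qed


end
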